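(* Let $\overline\eta\in(-\frac{\pi}{2},\frac{\pi}{2})^m$ and $\overline V\in\mathbb{R}^n_{>0}$ satisfy $E(\overline\eta)\overline V=\overline E_{fd}$ and condition $(\ast)$ below. Consider the system \[ \dot\eta=v,\qquad T\dot V=-E(\eta)V+\overline E_{fd},\qquad \lambda=\Gamma(V)\boldsymbol{\sin}(\eta), \] with input $v\in\mathbb{R}^m$ and output $\lambda\in\mathbb{R}^m$, and let $\overline v=\mathbf{0}$, $\overline\lambda=\Gamma(\overline V)\boldsymbol{\sin}(\overline\eta)$. Then $W_2$ (defined below) is positive definite in a neighbourhood of $(\overline\eta,\overline V)$ and satisfies along solutions \[ \dot W_2=-(\nabla_VW_2)^TT^{-1}\nabla_VW_2+(\lambda-\overline\lambda)^T(v-\overline v), \] i.e. the system is incrementally passive with respect to the constant equilibrium $(\overline\eta,\overline V)$.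
   Context: Standing setup (power network model). $\mathcal{G}=(\mathcal{V},\mathcal{E})$ is a connected undirected graph with node set $\{1,\dots,n\}$ and $m$ edges; each edge $k=\{i,j\}$ is given an arbitrary orientation, and $D\in\mathbb{R}^{n\times m}$ is the incidence matrix: $d_{ik}=+1$ if $i$ is the positive end of edge $k$, $-1$ if $i$ is the negative end, $0$ otherwise. $|D|$ denotes the matrix of entrywise absolute values of $D$. $\mathbf{1}_n$ is the all-ones vector. For each edge $k=\{i,j\}$ there is a susceptance $B_{ij}=B_{ji}>0$; each node has a self-susceptance $B_{ii}<0$ with $|B_{ii}|>\sum_{j\in\mathcal{N}_i}|B_{ij}|$ ($\mathcal{N}_i$ the neighbours of $i$ in $\mathcal{G}$), and reactances $X_{di}>X'_{di}>0$. For $V\in\mathbb{R}^n$, $\Gamma(V)=\mathrm{diag}(\gamma_1,\dots,\gamma_m)$ with $\gamma_k=V_iV_jB_{ij}$ for edge $k=\{i,j\}$. For $\eta\in\mathbb{R}^m$, $E(\eta)\in\mathbb{R}^{n\times n}$ is the symmetric matrix with $E_{ii}=\frac{1-B_{ii}(X_{di}-X'_{di})}{X_{di}-X'_{di}}$, $E_{ij}=-B_{ij}\cos(\eta_k)$ if $k=\{i,j\}$ is an edge, and $E_{ij}=0$ otherwise. $\boldsymbol{\sin}$, $\boldsymbol{\cos}$ act componentwise. $M,A,T$ are diagonal positive definite $n\times n$ matrices ($A=\mathrm{diag}(A_i)$), and $\overline E_{fd}\in\mathbb{R}^n$ is a constant vector. The network dynamics, with input $u\in\mathbb{R}^n$ (power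 generation) and demand $P^l$, are \[ \dot\eta=D^T\omega,\quad M\dot\omega=u-D\Gamma(V)\boldsymbol{\sin}(\eta)-A\omega-P^l,\quad T\dot V=-E(\eta)V+\overline E_{fd},\quad y=\omega, \] with state $(\eta,\omega,V)\in\mathbb{R}^m\times\mathbb{R}^n\times\mathbb{R}^n$. Condition $(\ast)$ on $(\overline\eta,\overline V)$: \[ E(\overline\eta)-\mathrm{diag}(\overline V)^{-1}|D|\Gamma(\overline V)\mathrm{diag}(\boldsymbol{\sin}(\overline\eta))\mathrm{diag}(\boldsymbol{\cos}(\overline\eta))^{-1}\mathrm{diag}(\boldsymbol{\sin}(\overline\eta))|D|^T\mathrm{diag}(\overline V)^{-1}>0. \] Storage function: $W_2(\eta,\overline\eta,V,\overline V)=-\mathbf{1}_m^T\Gamma(V)\boldsymbol{\cos}(\eta)+\mathbf{1}_m^T\Gamma(\overline V)\boldsymbol{\cos}(\overline\eta)-(\Gamma(\overline V)\boldsymbol{\sin}(\overline\eta))^T(\eta-\overline\eta)-\overline E_{fd}^T(V-\overline V)+\tfrac12V^TFV-\tfrac12\overline V^TF\overline V$, where $F$ is diagonal with $F_{ii}=\frac{1-B_{ii}(X_{di}-X'_{di})}{X_{di}-X'_{di}}$; note $\nabla_VW_2=E(\eta)V-\overline E_{fd}$. *)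

theory Defs
  imports "HOL-Analysis.Analysis"
begin

text \<open>Graph: nodes of finite type 'n, edges of finite type 'm; edge k is oriented
  from its positive end pe k to its negative end ne k.\<close>

definition incidence :: "('m \<Rightarrow> 'n) \<Rightarrow> ('m \<Rightarrow> 'n) \<Rightarrow> real^'m^'n" where
  "incidence pe ne = (\<chi> i k. if i = pe k then 1 else if i = ne k then -1 else 0)"

definition absm :: "real^'b^'a \<Rightarrow> real^'b^'a" where
  "absm M = (\<chi> i j. \<bar>M$i$j\<bar>)"

definition diagm :: "real^'a \<Rightarrow> real^'a^'a" where
  "diagm x = (\<chi> i j. if i = j then x$i else 0)"

definition vsin :: "real^'a \<Rightarrow> real^'a" where
  "vsin x = (\<chi> k. sin (x$k))"

definition vcos :: "real^'a \<Rightarrow> real^'a" where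
  "vcos x = (\<chi> k. cos (x$k))"

definition gam :: "('m \<Rightarrow> 'n) \<Rightarrow> ('m \<Rightarrow> 'n) \<Rightarrow> ('n \<Rightarrow> 'n \<Rightarrow> real) \<Rightarrow> real^'n \<Rightarrow> real^'m" where
  "gam pe ne B V = (\<chi> k. V$(pe k) * V$(ne k) * B (pe k) (ne k))"

definition Gam :: "('m \<Rightarrow> 'n) \<Rightarrow> ('m \<Rightarrow> 'n) \<Rightarrow> ('n \<Rightarrow> 'n \<Rightarrow> real) \<Rightarrow> real^'n \<Rightarrow> real^'m^'m" where
  "Gam pe ne B V = diagm (gam pe ne B V)"

definition Fvec :: "('n \<Rightarrow> 'n \<Rightarrow> real) \<Rightarrow> real^'n \<Rightarrow> real^'n \<Rightarrow> real^'n" where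
  "Fvec B Xd Xdp = (\<chi> i. (1 - B i i * (Xd$i - Xdp$i)) / (Xd$i - Xdp$i))"

text \<open>E(eta): diagonal F_ii; off-diagonal -B_ij cos(eta_k) if k = {i,j} is an edge, 0 otherwise
  (written as a sum over the edges joining i and j, which has at most one term for a simple graph).\<close>
definition Emat :: "('m::finite \<Rightarrow> 'n) \<Rightarrow> ('m \<Rightarrow> 'n) \<Rightarrow> ('n \<Rightarrow> 'n \<Rightarrow> real) \<Rightarrow> real^'n \<Rightarrow> real^'n
    \<Rightarrow> real^'m \<Rightarrow> real^'n^'n" where
  "Emat pe ne B Xd Xdp eta = (\<chi> i j. if i = j then Fvec B Xd Xdp $ i
      else - (\<Sum>k\<in>{k. {pe k, ne k} = {i, j}}. B i j * cos (eta$k)))"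

definition W2 :: "('m::finite \<Rightarrow> 'n::finite) \<Rightarrow> ('m \<Rightarrow> 'n) \<Rightarrow> ('n \<Rightarrow> 'n \<Rightarrow> real) \<Rightarrow> real^'n \<Rightarrow> real^'n
    \<Rightarrow> real^'n \<Rightarrow> real^'m \<Rightarrow> real^'m \<Rightarrow> real^'n \<Rightarrow> real^'n \<Rightarrow> real" where
  "W2 pe ne B Xd Xdp Efd eta etab V Vb =
     - ((\<chi> k. 1) \<bullet> (Gam pe ne B V *v vcos eta))
     + ((\<chi> k. 1) \<bullet> (Gam pe ne B Vb *v vcos etab))
     - (Gam pe ne B Vb *v vsin etab) \<bullet> (eta - etab)
     - Efd \<bullet> (V - Vb)
     + (1/2) * (V \<bullet> (diagm (Fvec B Xd Xdp) *v V))
     - (1/2) * (Vb \<bullet> (diagm (Fvec B Xd Xdp) *v Vb))"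

definition pos_def :: "real^'n^'n \<Rightarrow> bool" where
  "pos_def M \<longleftrightarrow> (\<forall>x. x \<noteq> 0 \<longrightarrow> 0 < x \<bullet> (M *v x))"

definition cond_star :: "('m::finite \<Rightarrow> 'n::finite) \<Rightarrow> ('m \<Rightarrow> 'n) \<Rightarrow> ('n \<Rightarrow> 'n \<Rightarrow> real) \<Rightarrow> real^'n \<Rightarrow> real^'n
    \<Rightarrow> real^'m \<Rightarrow> real^'n \<Rightarrow> bool" where
  "cond_star pe ne B Xd Xdp etab Vb \<longleftrightarrow>
     pos_def (Emat pe ne B Xd Xdp etab
       - matrix_inv (diagm Vb) ** absm (incidence pe ne) ** Gam pe ne B Vb ** diagm (vsin etab)
         ** matrix_inv (diagm (vcos etab)) ** diagm (vsin etab) ** transpose (absm (incidence pe ne))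
         ** matrix_inv (diagm Vb))"

end

theory Submission
  imports Defs
begin


lemma diagm_mv: "diagm x *v y = (\<chi> i. x$i * y$i)"
  by (simp add: diagm_def matrix_vector_mult_def vec_eq_iff mult_delta_left)

lemma ones_inner: "(\<chi> k. 1) \<bullet> (y::real^'m) = (\<Sum>k\<in>UNIV. y$k)"
  by (simp add: inner_vec_def)

lemma W2_expand:
  "W2 pe ne B Xd Xdp Efd eta etab V Vb =
     - (\<Sum>k\<in>UNIV. B (pe k) (ne k) * V$(pe k) * V$(ne k) * cos (eta$k))
     + (\<Sum>k\<in>UNIV. B (pe k) (ne k) * Vb$(pe k) * Vb$(ne k) * cos (etab$k))
     - (\<Sum>k\<in>UNIV. B (pe k) (ne k) * Vb$(pe k) * Vb$(ne k) * sin (etab$k) * (eta$k - etab$k))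
     - (\<Sum>i\<in>UNIV. Efd$i * (V$i - Vb$i))
     + (1/2) * (\<Sum>i\<in>UNIV. Fvec B Xd Xdp $ i * V$i * V$i)
     - (1/2) * (\<Sum>i\<in>UNIV. Fvec B Xd Xdp $ i * Vb$i * Vb$i)"
  unfolding W2_def Gam_def diagm_mv ones_inner
  by (simp add: inner_vec_def gam_def vcos_def vsin_def algebra_simps)

lemma sum_two: fixes f :: "'a::finite \<Rightarrow> real" shows "p \<noteq> q \<Longrightarrow> (\<Sum>i\<in>UNIV. if i = p \<or> i = q then f i else 0) = f p + (f q :: real)"
proof -
  assume pq: "p \<noteq> q"
  have "(\<Sum>i\<in>UNIV. if i = p \<or> i = q then f i else 0) =
        (\<Sum>i\<in>UNIV. (if i = p then f i else 0) + (if i = q then f i else 0))"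
    by (rule sum.cong) (use pq in auto)
  also have "\<dots> = f p + f q" by (simp add: sum.distrib)
  finally show ?thesis .
qed

lemma Emat_bil:
  fixes pe ne :: "'m::finite \<Rightarrow> 'n::finite"
  assumes no_loops: "\<forall>k. pe k \<noteq> ne k" and B_sym: "\<forall>i j. B i j = B j i"
  shows "u \<bullet> (Emat pe ne B Xd Xdp eta *v V) =
     (\<Sum>i\<in>UNIV. Fvec B Xd Xdp $ i * u$i * V$i)
     - (\<Sum>k\<in>UNIV. B (pe k) (ne k) * cos (eta$k) * (u$(pe k) * V$(ne k) + u$(ne k) * V$(pe k)))"
proof -
  let ?F = "Fvec B Xd Xdp"
  define f where "f i j k = u$i * (B i j * cos (eta$k)) * V$j" for i j k
  have E: "Emat pe ne B Xd Xdp eta $ i $ j = (if i = j then ?F $ i else 0)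
       - (\<Sum>k\<in>UNIV. if {pe k, ne k} = {i, j} then B i j * cos (eta$k) else 0)" for i j
  proof (cases "i = j")
    case True
    have "{pe k, ne k} \<noteq> {i, j}" for k using True no_loops[rule_format, of k] by (auto simp: doubleton_eq_iff)
    then show ?thesis using True by (auto simp: Emat_def intro!: sum.neutral)
  next
    case False
    then show ?thesis by (simp add: Emat_def sum.If_cases Int_def)
  qed
  have "u \<bullet> (Emat pe ne B Xd Xdp eta *v V) = (\<Sum>i\<in>UNIV. u$i * (\<Sum>j\<in>UNIV. Emat pe ne B Xd Xdp eta $ i $ j * V$j))"
    by (simp add: inner_vec_def matrix_vector_mult_def)
  also have "\<dots> = (\<Sum>i\<in>UNIV. ?F $ i * u$i * V$i - (\<Sum>j\<in>UNIV. \<Sum>k\<in>UNIV.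
       if {pe k, ne k} = {i, j} then f i j k else 0))"
  proof (rule sum.cong[OF refl])
    fix i
    have "(\<Sum>j\<in>UNIV. Emat pe ne B Xd Xdp eta $ i $ j * V$j) = (\<Sum>j\<in>UNIV. (if i = j then ?F $ i * V$j else 0)
       - (\<Sum>k\<in>UNIV. if {pe k, ne k} = {i, j} then B i j * cos (eta$k) * V$j else 0))"
      by (simp add: E left_diff_distrib mult_delta_left sum_distrib_right)
    also have "\<dots> = ?F $ i * V$i - (\<Sum>j\<in>UNIV. \<Sum>k\<in>UNIV. if {pe k, ne k} = {i, j} then B i j * cos (eta$k) * V$j else 0)"
      by (simp add: sum_subtractf)
    finally have X: "u$i * (\<Sum>j\<in>UNIV. Emat pe ne B Xd Xdp eta $ i $ j * V$j) = u$i * (?F $ i * V$i) - (\<Sum>j\<in>UNIV. \<Sum>k\<in>UNIV. if {pe k, ne k} = {i, j} then u$i * (B i j * cos (eta$k) * V$j) else 0)"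
      by (simp add: right_diff_distrib sum_distrib_left mult_delta_right)
    have e: "u$i*(?F$i*V$i) = ?F$i*u$i*V$i" by (simp add: mult_ac)
    have S: "(\<Sum>j\<in>UNIV. \<Sum>k\<in>UNIV. if {pe k, ne k} = {i, j} then u$i * (B i j * cos (eta$k) * V$j) else 0)
      = (\<Sum>j\<in>UNIV. \<Sum>k\<in>UNIV. if {pe k, ne k} = {i, j} then u$i * (B i j * cos (eta$k)) * V$j else 0)"
      by (simp only: mult.assoc)
    show "u$i * (\<Sum>j\<in>UNIV. Emat pe ne B Xd Xdp eta $ i $ j * V$j) = ?F $ i * u$i * V$i - (\<Sum>j\<in>UNIV. \<Sum>k\<in>UNIV.
       if {pe k, ne k} = {i, j} then f i j k else 0)"
      unfolding f_def by (subst X, subst S, subst e, rule refl)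
  qed
  also have "\<dots> = (\<Sum>i\<in>UNIV. ?F $ i * u$i * V$i) - (\<Sum>i\<in>UNIV. \<Sum>j\<in>UNIV. \<Sum>k\<in>UNIV.
       if {pe k, ne k} = {i, j} then f i j k else 0)"
    by (simp add: sum_subtractf)
  also have "(\<Sum>i\<in>UNIV. \<Sum>j\<in>UNIV. \<Sum>k\<in>UNIV. if {pe k, ne k} = {i, j} then f i j k else 0)
      = (\<Sum>k\<in>UNIV. \<Sum>i\<in>UNIV. \<Sum>j\<in>UNIV. if {pe k, ne k} = {i, j} then f i j k else 0)"
    by (subst sum.swap, rule sum.cong[OF refl], rule sum.swap)
  also have "\<dots> = (\<Sum>k\<in>UNIV. f (pe k) (ne k) k + f (ne k) (pe k) k)"
  proof (rule sum.cong[OF refl])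
    fix k
    have "(\<Sum>j\<in>UNIV. if {pe k, ne k} = {i, j} then f i j k else 0) =
          (if i = pe k \<or> i = ne k then (if i = pe k then f i (ne k) k else f i (pe k) k) else 0)" for i
    proof -
      have pq: "pe k \<noteq> ne k" using no_loops by blast
      consider "i = pe k" | "i = ne k" | "i \<noteq> pe k \<and> i \<noteq> ne k" by blast
      then show ?thesis
      proof cases
        case 1
        then have "\<And>j. ({pe k, ne k} = {i, j}) = (j = ne k)" using pq by (auto simp: doubleton_eq_iff)
        then show ?thesis using 1 by simp
      next
        case 2
        then have "\<And>j. ({pe k, ne k} = {i, j}) = (j = pe k)" using pq by (auto simp: doubleton_eq_iff)
        then show ?thesis using 2 pq by simp
      next
        case 3
        then have "\<And>j. ({pe k, ne k} = {i, j}) = False" by (auto simp: doubleton_eq_iff)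
        then show ?thesis using 3 by simp
      qed
    qed
    then have "(\<Sum>i\<in>UNIV. \<Sum>j\<in>UNIV. if {pe k, ne k} = {i, j} then f i j k else 0) =
          (\<Sum>i\<in>UNIV. if i = pe k \<or> i = ne k then (if i = pe k then f i (ne k) k else f i (pe k) k) else 0)"
      by simp
    also have "\<dots> = f (pe k) (ne k) k + f (ne k) (pe k) k"
      using sum_two[OF no_loops[rule_format, of k]] no_loops[rule_format, of k] by simp
    finally show "(\<Sum>i\<in>UNIV. \<Sum>j\<in>UNIV. if {pe k, ne k} = {i, j} then f i j k else 0) =
          f (pe k) (ne k) k + f (ne k) (pe k) k" .
  qed
  also have "\<dots> = (\<Sum>k\<in>UNIV. B (pe k) (ne k) * cos (eta$k) * (u$(pe k) * V$(ne k) + u$(ne k) * V$(pe k)))"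
  proof (rule sum.cong[OF refl])
    fix k
    have "B (ne k) (pe k) = B (pe k) (ne k)" using B_sym by blast
    then show "f (pe k) (ne k) k + f (ne k) (pe k) k = B (pe k) (ne k) * cos (eta$k) * (u$(pe k) * V$(ne k) + u$(ne k) * V$(pe k))"
      by (simp add: f_def algebra_simps)
  qed
  finally show ?thesis .
qed

definition D1 :: "('m::finite \<Rightarrow> 'n::finite) \<Rightarrow> ('m \<Rightarrow> 'n) \<Rightarrow> ('n \<Rightarrow> 'n \<Rightarrow> real) \<Rightarrow> real^'n \<Rightarrow> real^'n
    \<Rightarrow> real^'n \<Rightarrow> real^'m \<Rightarrow> real^'n \<Rightarrow> real^'m \<Rightarrow> real^'n \<Rightarrow> real^'m \<Rightarrow> real^'n \<Rightarrow> real" where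
  "D1 pe ne B Xd Xdp Efd etab Vb eta V a b =
     (\<Sum>k\<in>UNIV. (B (pe k) (ne k) * V$(pe k) * V$(ne k) * sin (eta$k)
                  - B (pe k) (ne k) * Vb$(pe k) * Vb$(ne k) * sin (etab$k)) * a$k)
   + (\<Sum>i\<in>UNIV. (Fvec B Xd Xdp $ i * V$i - Efd$i) * b$i)
   - (\<Sum>k\<in>UNIV. B (pe k) (ne k) * cos (eta$k) * (b$(pe k) * V$(ne k) + b$(ne k) * V$(pe k)))"

lemma W2_deriv:
  fixes pe ne :: "'m::finite \<Rightarrow> 'n::finite"
  assumes da: "\<And>k. ((\<lambda>s. eta s $ k) has_real_derivative a$k) (at t)"
    and db: "\<And>i. ((\<lambda>s. V s $ i) has_real_derivative b$i) (at t)"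
  shows "((\<lambda>s. W2 pe ne B Xd Xdp Efd (eta s) etab (V s) Vb) has_real_derivative
           D1 pe ne B Xd Xdp Efd etab Vb (eta t) (V t) a b) (at t)"
  unfolding W2_expand
  apply (rule DERIV_cong)
   apply (rule derivative_intros da db)+
  apply (simp add: D1_def algebra_simps sum.distrib sum_subtractf sum_negf sum_distrib_left[symmetric] sum_distrib_right[symmetric])
  apply (simp add: sum_distrib_left mult_ac)
  done

lemma diagm_mult: "diagm x ** diagm y = diagm (\<chi> i. x$i * (y$i::real))"
  by (simp add: diagm_def matrix_matrix_mult_def vec_eq_iff mult_delta_left mult_delta_right)

lemma mat1_diagm: "mat 1 = diagm (\<chi> i. (1::real))"
  by (simp add: diagm_def mat_def vec_eq_iff)

lemma matrix_inv_eq: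
  fixes A :: "real^'n^'n"
  assumes "A ** Bm = mat 1" "Bm ** A = mat 1"
  shows "matrix_inv A = Bm"
proof -
  have ex: "\<exists>A'. A ** A' = mat 1 \<and> A' ** A = mat 1" using assms by blast
  define C where "C = matrix_inv A"
  have C: "A ** C = mat 1 \<and> C ** A = mat 1"
    unfolding C_def matrix_inv_def by (rule someI_ex[OF ex])
  have "C = C ** (A ** Bm)" using assms by (simp add: matrix_mul_rid)
  also have "\<dots> = (C ** A) ** Bm" by (simp add: matrix_mul_assoc)
  also have "\<dots> = Bm" using C by (simp add: matrix_mul_lid)
  finally show ?thesis unfolding C_def .
qed

lemma matrix_inv_diagm:
  assumes "\<forall>i. x$i \<noteq> (0::real)"
  shows "matrix_inv (diagm x) = diagm (\<chi> i. 1 / x$i)"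
  by (rule matrix_inv_eq) (use assms in \<open>simp_all add: diagm_mult mat1_diagm\<close>)




lemma Gam_vsin: "Gam pe ne B V *v vsin eta = (\<chi> k. V$(pe k) * V$(ne k) * B (pe k) (ne k) * sin (eta$k))"
  by (simp add: Gam_def diagm_mv gam_def vsin_def)

lemma part2:
  fixes pe ne :: "'m::finite \<Rightarrow> 'n::finite"
  assumes no_loops: "\<forall>k. pe k \<noteq> ne k" and B_sym: "\<forall>i j. B i j = B j i"
    and T_pos: "\<forall>i. Tv$i > 0"
  shows "(\<forall>(eta :: real \<Rightarrow> real^'m) (V :: real \<Rightarrow> real^'n) (v :: real \<Rightarrow> real^'m) V' t.
            (eta has_vector_derivative v t) (at t)
            \<and> (V has_vector_derivative V' t) (at t)
            \<and> diagm Tv *v V' t = - (Emat pe ne B Xd Xdp (eta t) *v V t) + Efd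
          \<longrightarrow> (let g = Emat pe ne B Xd Xdp (eta t) *v V t - Efd;
                   lam = Gam pe ne B (V t) *v vsin (eta t);
                   lamb = Gam pe ne B Vb *v vsin etab;
                   vb = (0 :: real^'m)
               in ((\<lambda>s. W2 pe ne B Xd Xdp Efd (eta s) etab (V s) Vb) has_real_derivative
                     (- (g \<bullet> (matrix_inv (diagm Tv) *v g)) + (lam - lamb) \<bullet> (v t - vb))) (at t)))"
proof (intro allI impI)
  fix eta :: "real \<Rightarrow> real^'m" and V :: "real \<Rightarrow> real^'n" and v :: "real \<Rightarrow> real^'m" and V' t
  assume H: "(eta has_vector_derivative v t) (at t) \<and> (V has_vector_derivative V' t) (at t)
            \<and> diagm Tv *v V' t = - (Emat pe ne B Xd Xdp (eta t) *v V t) + Efd"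
  define g where "g = Emat pe ne B Xd Xdp (eta t) *v V t - Efd"
  have da: "((\<lambda>s. eta s $ k) has_real_derivative v t $ k) (at t)" for k
    using bounded_linear.has_vector_derivative[OF bounded_linear_vec_nth, of eta "v t" "at t" k] H
    by (simp add: has_real_derivative_iff_has_vector_derivative)
  have db: "((\<lambda>s. V s $ i) has_real_derivative V' t $ i) (at t)" for i
    using bounded_linear.has_vector_derivative[OF bounded_linear_vec_nth, of V "V' t" "at t" i] H
    by (simp add: has_real_derivative_iff_has_vector_derivative)
  have Tne: "\<forall>i. Tv$i \<noteq> 0" using T_pos by (metis less_irrefl)
  have V'i: "V' t $ i = - g$i / Tv$i" for i
  proof -
    have "Tv$i * V' t $ i = - g$i"
      using arg_cong[OF conjunct2[OF conjunct2[OF H]], of "\<lambda>x. x$i"] by (simp add: diagm_mv g_def)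
    then show ?thesis using Tne by (simp add: field_simps)
  qed
  have gT: "g \<bullet> (matrix_inv (diagm Tv) *v g) = - (V' t \<bullet> g)"
    by (simp add: matrix_inv_diagm[OF Tne] diagm_mv inner_vec_def V'i sum_negf[symmetric])
  have "D1 pe ne B Xd Xdp Efd etab Vb (eta t) (V t) (v t) (V' t)
      = (Gam pe ne B (V t) *v vsin (eta t) - Gam pe ne B Vb *v vsin etab) \<bullet> v t
        + (V' t \<bullet> (Emat pe ne B Xd Xdp (eta t) *v V t) - V' t \<bullet> Efd)"
    unfolding D1_def Emat_bil[OF no_loops B_sym] Gam_vsin
    by (simp add: inner_vec_def algebra_simps sum_subtractf sum.distrib)
  also have "\<dots> = - (g \<bullet> (matrix_inv (diagm Tv) *v g)) + (Gam pe ne B (V t) *v vsin (eta t) - Gam pe ne B Vb *v vsin etab) \<bullet> (v t - 0)"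
    unfolding gT by (simp add: g_def inner_diff_right)
  finally show "let g = Emat pe ne B Xd Xdp (eta t) *v V t - Efd;
                   lam = Gam pe ne B (V t) *v vsin (eta t);
                   lamb = Gam pe ne B Vb *v vsin etab;
                   vb = (0 :: real^'m)
               in ((\<lambda>s. W2 pe ne B Xd Xdp Efd (eta s) etab (V s) Vb) has_real_derivative
                     (- (g \<bullet> (matrix_inv (diagm Tv) *v g)) + (lam - lamb) \<bullet> (v t - vb))) (at t)"
    using W2_deriv[OF da db, of pe ne B Xd Xdp Efd etab Vb] by (simp add: Let_def g_def)
qed



lemma absm_inc: "absm (incidence pe ne) $ i $ k = (if i = pe k \<or> i = ne k then (1::real) else 0)"
  by (simp add: absm_def incidence_def)

lemma AT_mv:
  fixes pe ne :: "'m::finite \<Rightarrow> 'n::finite"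
  assumes "\<forall>k. pe k \<noteq> ne k"
  shows "(transpose (absm (incidence pe ne)) *v y) $ k = y$(pe k) + y$(ne k)"
proof -
  have "(transpose (absm (incidence pe ne)) *v y) $ k = (\<Sum>i\<in>UNIV. if i = pe k \<or> i = ne k then y$i else 0)"
    by (simp add: matrix_vector_mult_def transpose_def absm_inc mult_delta_left cong: if_cong)
  also have "\<dots> = y$(pe k) + y$(ne k)" using assms by (simp add: sum_two)
  finally show ?thesis .
qed

lemma A_inner:
  fixes pe ne :: "'m::finite \<Rightarrow> 'n::finite"
  assumes "\<forall>k. pe k \<noteq> ne k"
  shows "x \<bullet> (absm (incidence pe ne) *v z) = (\<Sum>k\<in>UNIV. z$k * (x$(pe k) + x$(ne k)))"
proof -
  have "x \<bullet> (absm (incidence pe ne) *v z) = (\<Sum>i\<in>UNIV. \<Sum>k\<in>UNIV. if i = pe k \<or> i = ne k then z$k * x$i else 0)"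
    by (simp add: inner_vec_def matrix_vector_mult_def absm_inc sum_distrib_left mult_delta_left mult_delta_right mult.commute cong: if_cong)
  also have "\<dots> = (\<Sum>k\<in>UNIV. \<Sum>i\<in>UNIV. if i = pe k \<or> i = ne k then z$k * x$i else 0)"
    by (rule sum.swap)
  also have "\<dots> = (\<Sum>k\<in>UNIV. z$k * (x$(pe k) + x$(ne k)))"
    using assms by (simp add: sum_two algebra_simps)
  finally show ?thesis .
qed

definition Qf :: "('m::finite \<Rightarrow> 'n::finite) \<Rightarrow> ('m \<Rightarrow> 'n) \<Rightarrow> ('n \<Rightarrow> 'n \<Rightarrow> real) \<Rightarrow> real^'n \<Rightarrow> real^'n
    \<Rightarrow> real^'m \<Rightarrow> real^'n \<Rightarrow> real^'m \<Rightarrow> real^'n \<Rightarrow> real" where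
  "Qf pe ne B Xd Xdp eta V a b =
     (\<Sum>k\<in>UNIV. B (pe k) (ne k) * V$(pe k) * V$(ne k) * cos (eta$k) * a$k * a$k)
   + 2 * (\<Sum>k\<in>UNIV. B (pe k) (ne k) * sin (eta$k) * a$k * (b$(pe k) * V$(ne k) + b$(ne k) * V$(pe k)))
   + (\<Sum>i\<in>UNIV. Fvec B Xd Xdp $ i * b$i * b$i)
   - 2 * (\<Sum>k\<in>UNIV. B (pe k) (ne k) * cos (eta$k) * b$(pe k) * b$(ne k))"

lemma Q_pos:
  fixes pe ne :: "'m::finite \<Rightarrow> 'n::finite"
  assumes no_loops: "\<forall>k. pe k \<noteq> ne k"
    and B_sym: "\<forall>i j. B i j = B j i"
    and B_edge: "\<forall>k. B (pe k) (ne k) > 0"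
    and etab_range: "\<forall>k. - (pi/2) < etab$k \<and> etab$k < pi/2"
    and Vb_pos: "\<forall>i. Vb$i > 0"
    and star: "cond_star pe ne B Xd Xdp etab Vb"
    and nz: "(a, b) \<noteq> 0"
  shows "Qf pe ne B Xd Xdp etab Vb a b > 0"
proof -
  define ga where "ga k = B (pe k) (ne k) * Vb$(pe k) * Vb$(ne k)" for k
  define s where "s k = sin (etab$k)" for k
  define c where "c k = cos (etab$k)" for k
  define w where "w k = b$(pe k) / Vb$(pe k) + b$(ne k) / Vb$(ne k)" for k
  have c_pos: "c k > 0" for k using etab_range unfolding c_def by (simp add: cos_gt_zero_pi)
  have ga_pos: "ga k > 0" for k using B_edge Vb_pos unfolding ga_def by simp
  have Vne: "\<forall>i. Vb$i \<noteq> 0" using Vb_pos by (metis less_irrefl)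
  have cne: "\<forall>k. vcos etab $ k \<noteq> 0" using c_pos unfolding c_def vcos_def by (metis less_irrefl vec_lambda_beta)
  let ?E = "Emat pe ne B Xd Xdp etab"
  let ?X = "matrix_inv (diagm Vb) ** absm (incidence pe ne) ** Gam pe ne B Vb ** diagm (vsin etab)
         ** matrix_inv (diagm (vcos etab)) ** diagm (vsin etab) ** transpose (absm (incidence pe ne))
         ** matrix_inv (diagm Vb)"
  have Xb: "b \<bullet> (?X *v b) = (\<Sum>k\<in>UNIV. ga k * s k * s k / c k * w k * w k)"
  proof -
    have "?X *v b = matrix_inv (diagm Vb) *v (absm (incidence pe ne) *v (Gam pe ne B Vb *v (diagm (vsin etab)
         *v (matrix_inv (diagm (vcos etab)) *v (diagm (vsin etab) *v (transpose (absm (incidence pe ne))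
         *v (matrix_inv (diagm Vb) *v b)))))))"
      by (simp only: matrix_vector_mul_assoc[symmetric])
    also have "\<dots> = diagm (\<chi> i. 1 / Vb$i) *v (absm (incidence pe ne) *v (\<chi> k. ga k * s k * s k / c k * w k))"
      unfolding matrix_inv_diagm[OF Vne] matrix_inv_diagm[OF cne]
      by (simp add: diagm_mv Gam_def gam_def vsin_def vcos_def AT_mv[OF no_loops] w_def ga_def s_def c_def
            vec_eq_iff del: transpose_matrix_vector) (simp add: algebra_simps Vne[rule_format])
    finally have "b \<bullet> (?X *v b) = (\<chi> i. b$i / Vb$i) \<bullet> (absm (incidence pe ne) *v (\<chi> k. ga k * s k * s k / c k * w k))"
      by (simp add: inner_vec_def diagm_mv)
    also have "\<dots> = (\<Sum>k\<in>UNIV. ga k * s k * s k / c k * w k * w k)"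
      unfolding A_inner[OF no_loops] by (simp add: w_def mult.assoc)
    finally show ?thesis .
  qed
  have Eb: "b \<bullet> (?E *v b) = (\<Sum>i\<in>UNIV. Fvec B Xd Xdp $ i * b$i * b$i)
      - 2 * (\<Sum>k\<in>UNIV. B (pe k) (ne k) * cos (etab$k) * b$(pe k) * b$(ne k))"
    unfolding Emat_bil[OF no_loops B_sym] by (simp add: sum_distrib_left algebra_simps)
  have M: "b \<bullet> ((?E - ?X) *v b) = b \<bullet> (?E *v b) - b \<bullet> (?X *v b)"
    by (simp add: matrix_vector_mult_diff_rdistrib inner_diff_right)
  have mid: "B (pe k) (ne k) * sin (etab$k) * a$k * (b$(pe k) * Vb$(ne k) + b$(ne k) * Vb$(pe k))
       = ga k * s k * a$k * w k" for k
    using Vne unfolding ga_def s_def w_def by (simp add: field_simps)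
  have Qeq: "Qf pe ne B Xd Xdp etab Vb a b = (\<Sum>k\<in>UNIV. ga k * c k * (a$k + s k * w k / c k)^2)
        + b \<bullet> ((?E - ?X) *v b)"
  proof -
    have sq: "ga k * c k * (a$k + s k * w k / c k)^2 = ga k * c k * a$k * a$k + 2 * (ga k * s k * a$k * w k)
            + ga k * s k * s k / c k * w k * w k" for k
      using c_pos[of k] by (simp add: field_simps power2_eq_square)
    show ?thesis
      unfolding M Eb Xb Qf_def mid sq
      by (simp add: sum.distrib sum_distrib_left ga_def c_def algebra_simps)
  qed
  have S0: "(\<Sum>k\<in>UNIV. ga k * c k * (a$k + s k * w k / c k)^2) \<ge> 0"
    by (intro sum_nonneg mult_nonneg_nonneg less_imp_le[OF ga_pos] less_imp_le[OF c_pos] zero_le_power2)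
  show ?thesis
  proof (cases "b = 0")
    case False
    have "b \<bullet> ((?E - ?X) *v b) > 0" using star False unfolding cond_star_def pos_def_def by blast
    then show ?thesis using Qeq S0 by linarith
  next
    case True
    then have a0: "a \<noteq> 0" using nz by (simp add: zero_prod_def)
    then obtain k0 where k0: "a$k0 \<noteq> 0" by (metis vec_eq_iff zero_index)
    have w0: "w k = 0" for k using True unfolding w_def by simp
    have "(\<Sum>k\<in>UNIV. ga k * c k * (a$k + s k * w k / c k)^2) > 0"
    proof (rule sum_pos2[where i=k0])
      show "0 < ga k0 * c k0 * (a $ k0 + s k0 * w k0 / c k0)\<^sup>2"
        using ga_pos[of k0] c_pos[of k0] k0 w0 by simp
      show "\<And>k. k \<in> UNIV \<Longrightarrow> 0 \<le> ga k * c k * (a $ k + s k * w k / c k)\<^sup>2"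
        by (intro mult_nonneg_nonneg less_imp_le[OF ga_pos] less_imp_le[OF c_pos] zero_le_power2)
    qed auto
    moreover have "b \<bullet> ((?E - ?X) *v b) = 0" using True by simp
    ultimately show ?thesis using Qeq by linarith
  qed
qed




lemma D1_line_deriv:
  "((\<lambda>t. D1 pe ne B Xd Xdp Efd etab Vb (e0 + t *\<^sub>R a) (V0 + t *\<^sub>R b) a b) has_real_derivative
      Qf pe ne B Xd Xdp (e0 + t *\<^sub>R a) (V0 + t *\<^sub>R b) a b) (at t)"
  unfolding D1_def
  apply (simp only: vector_add_component vector_scaleR_component real_scaleR_def)
  apply (rule DERIV_cong)
   apply (rule derivative_intros)+
  apply (simp add: Qf_def algebra_simps sum.distrib sum_subtractf sum_negf sum_distrib_left[symmetric] sum_distrib_right[symmetric])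
  done

lemma W2_line_deriv:
  "((\<lambda>t. W2 pe ne B Xd Xdp Efd (e0 + t *\<^sub>R a) etab (V0 + t *\<^sub>R b) Vb) has_real_derivative
      D1 pe ne B Xd Xdp Efd etab Vb (e0 + t *\<^sub>R a) (V0 + t *\<^sub>R b) a b) (at t)"
proof (rule W2_deriv)
  show "((\<lambda>s. (e0 + s *\<^sub>R a) $ k) has_real_derivative a $ k) (at t)" for k
    by (simp only: vector_add_component vector_scaleR_component real_scaleR_def) (rule DERIV_cong, (rule derivative_intros)+, simp)
  show "((\<lambda>s. (V0 + s *\<^sub>R b) $ i) has_real_derivative b $ i) (at t)" for i
    by (simp only: vector_add_component vector_scaleR_component real_scaleR_def) (rule DERIV_cong, (rule derivative_intros)+, simp)
qed

lemma D1_equil: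
  fixes pe ne :: "'m::finite \<Rightarrow> 'n::finite"
  assumes no_loops: "\<forall>k. pe k \<noteq> ne k" and B_sym: "\<forall>i j. B i j = B j i"
    and equil: "Emat pe ne B Xd Xdp etab *v Vb = Efd"
  shows "D1 pe ne B Xd Xdp Efd etab Vb etab Vb a b = 0"
proof -
  have "b \<bullet> (Emat pe ne B Xd Xdp etab *v Vb) = b \<bullet> Efd" using equil by simp
  then have "(\<Sum>i\<in>UNIV. Fvec B Xd Xdp $ i * b$i * Vb$i)
     - (\<Sum>k\<in>UNIV. B (pe k) (ne k) * cos (etab$k) * (b$(pe k) * Vb$(ne k) + b$(ne k) * Vb$(pe k)))
     = (\<Sum>i\<in>UNIV. b$i * Efd$i)"
    unfolding Emat_bil[OF no_loops B_sym] by (simp add: inner_vec_def)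
  then show ?thesis unfolding D1_def
    by (simp add: algebra_simps sum_subtractf)
qed

lemma Qf_scale:
  "Qf pe ne B Xd Xdp eta V (c *\<^sub>R a) (c *\<^sub>R b) = c^2 * Qf pe ne B Xd Xdp eta V a b"
  unfolding Qf_def by (simp add: sum_distrib_left algebra_simps power2_eq_square)

lemma Qf_cont:
  fixes pe ne :: "'m::finite \<Rightarrow> 'n::finite"
  shows "continuous_on UNIV (\<lambda>p::((real^'m) \<times> (real^'n)) \<times> ((real^'m) \<times> (real^'n)).
     Qf pe ne B Xd Xdp (fst (fst p)) (snd (fst p)) (fst (snd p)) (snd (snd p)))"
  unfolding Qf_def by (intro continuous_intros)




lemma part1:
  fixes pe ne :: "'m::finite \<Rightarrow> 'n::finite"
  assumes no_loops: "\<forall>k. pe k \<noteq> ne k"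
    and B_sym: "\<forall>i j. B i j = B j i"
    and B_edge: "\<forall>k. B (pe k) (ne k) > 0"
    and etab_range: "\<forall>k. - (pi/2) < etab$k \<and> etab$k < pi/2"
    and Vb_pos: "\<forall>i. Vb$i > 0"
    and equil: "Emat pe ne B Xd Xdp etab *v Vb = Efd"
    and star: "cond_star pe ne B Xd Xdp etab Vb"
  shows "\<exists>U. open U \<and> (etab, Vb) \<in> U \<and> W2 pe ne B Xd Xdp Efd etab etab Vb Vb = 0 \<and>
            (\<forall>eta V. (eta, V) \<in> U \<and> (eta, V) \<noteq> (etab, Vb) \<longrightarrow>
               W2 pe ne B Xd Xdp Efd eta etab V Vb > 0)"
proof -
  define Qp where "Qp p = Qf pe ne B Xd Xdp (fst (fst p)) (snd (fst p)) (fst (snd p)) (snd (snd p))"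
    for p :: "((real^'m) \<times> (real^'n)) \<times> ((real^'m) \<times> (real^'n))"
  define W where "W = {p. (\<lambda>_. 0) p < Qp p}"
  have oW: "open W" unfolding W_def Qp_def
    by (rule open_Collect_less) (auto intro: continuous_intros Qf_cont)
  have sub: "{(etab, Vb)} \<times> sphere 0 1 \<subseteq> W"
  proof
    fix p assume "p \<in> {(etab, Vb)} \<times> sphere (0::(real^'m) \<times> (real^'n)) 1"
    then obtain a b where p: "p = ((etab, Vb), (a, b))" and n: "norm (a, b) = 1" by auto
    have "(a, b) \<noteq> 0" using n by auto
    then show "p \<in> W" unfolding W_def Qp_def p
      using Q_pos[OF no_loops B_sym B_edge etab_range Vb_pos star] by simp
  qed
  obtain X0 where X0: "(etab, Vb) \<in> X0" "open X0" "X0 \<times> sphere 0 1 \<subseteq> W"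
    using Elementary_Topology.tube_lemma[OF compact_sphere oW sub] by blast
  obtain r where r: "r > 0" "ball (etab, Vb) r \<subseteq> X0"
    using X0(1,2) open_contains_ball by blast
  have W0: "W2 pe ne B Xd Xdp Efd etab etab Vb Vb = 0" by (simp add: W2_def)
  have pos: "W2 pe ne B Xd Xdp Efd eta etab V Vb > 0"
    if eV: "(eta, V) \<in> ball (etab, Vb) r" "(eta, V) \<noteq> (etab, Vb)" for eta V
  proof -
    define a where "a = eta - etab"
    define b where "b = V - Vb"
    define n where "n = norm (a, b)"
    have hnz: "(a, b) \<noteq> 0" using eV(2) unfolding a_def b_def by (auto simp: zero_prod_def)
    then have npos: "n > 0" unfolding n_def by simp
    have "(etab, Vb) - (eta, V) = - (eta - etab, V - Vb)" by simp
    then have "dist (etab, Vb) (eta, V) = n" unfolding n_def a_def b_def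
      by (simp only: dist_norm norm_minus_cancel)
    then have nr: "n < r" using eV(1) by simp
    have Qpos: "Qf pe ne B Xd Xdp (etab + t *\<^sub>R a) (Vb + t *\<^sub>R b) a b > 0"
      if t: "0 \<le> t" "t \<le> 1" for t
    proof -
      have "dist (etab, Vb) (etab + t *\<^sub>R a, Vb + t *\<^sub>R b) = \<bar>t\<bar> * n"
      proof -
        have "(etab, Vb) - (etab + t *\<^sub>R a, Vb + t *\<^sub>R b) = - (t *\<^sub>R (a, b))" by simp
        then show ?thesis by (simp only: dist_norm norm_minus_cancel norm_scaleR n_def)
      qed
      also have "\<dots> < r"
      proof -
        have "t * n \<le> n" using t npos by (simp add: mult_left_le_one_le less_imp_le)
        then show ?thesis using t nr by (simp add: abs_of_nonneg)
      qed
      finally have "(etab + t *\<^sub>R a, Vb + t *\<^sub>R b) \<in> X0" using r(2) by auto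
      moreover have "((1/n) *\<^sub>R a, (1/n) *\<^sub>R b) \<in> sphere 0 1"
      proof -
        have "((1/n) *\<^sub>R a, (1/n) *\<^sub>R b) = (1/n) *\<^sub>R (a, b)" by simp
        then have "norm ((1/n) *\<^sub>R a, (1/n) *\<^sub>R b) = \<bar>1/n\<bar> * n" unfolding n_def
          by (simp only: norm_scaleR)
        then show ?thesis using npos by simp
      qed
      ultimately have "((etab + t *\<^sub>R a, Vb + t *\<^sub>R b), ((1/n) *\<^sub>R a, (1/n) *\<^sub>R b)) \<in> W"
        using X0(3) by blast
      then have "Qf pe ne B Xd Xdp (etab + t *\<^sub>R a) (Vb + t *\<^sub>R b) ((1/n) *\<^sub>R a) ((1/n) *\<^sub>R b) > 0"
        unfolding W_def Qp_def by simp
      then have "(1/n)^2 * Qf pe ne B Xd Xdp (etab + t *\<^sub>R a) (Vb + t *\<^sub>R b) a b > 0"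
        by (simp only: Qf_scale)
      then show ?thesis using npos by (simp add: zero_less_mult_iff)
    qed
    define d where "d t = D1 pe ne B Xd Xdp Efd etab Vb (etab + t *\<^sub>R a) (Vb + t *\<^sub>R b) a b" for t
    have d0: "d 0 = 0" unfolding d_def using D1_equil[OF no_loops B_sym equil] by simp
    have dpos: "d t > 0" if "0 < t" "t \<le> 1" for t
    proof -
      have dd: "\<And>x. (d has_real_derivative Qf pe ne B Xd Xdp (etab + x *\<^sub>R a) (Vb + x *\<^sub>R b) a b) (at x)"
        unfolding d_def by (rule D1_line_deriv)
      have "\<exists>z>0. z < t \<and> d t - d 0 = (t - 0) * Qf pe ne B Xd Xdp (etab + z *\<^sub>R a) (Vb + z *\<^sub>R b) a b"
        by (rule MVT2[OF that(1)], rule dd)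
      then obtain z where z: "0 < z" "z < t" "d t - d 0 = (t - 0) * Qf pe ne B Xd Xdp (etab + z *\<^sub>R a) (Vb + z *\<^sub>R b) a b"
        by blast
      have "Qf pe ne B Xd Xdp (etab + z *\<^sub>R a) (Vb + z *\<^sub>R b) a b > 0" using Qpos z that by simp
      then show ?thesis using z d0 that by simp
    qed
    define g where "g t = W2 pe ne B Xd Xdp Efd (etab + t *\<^sub>R a) etab (Vb + t *\<^sub>R b) Vb" for t
    have gd: "\<And>x. (g has_real_derivative d x) (at x)"
      unfolding g_def d_def by (rule W2_line_deriv)
    have "\<exists>z>0. z < 1 \<and> g 1 - g 0 = (1 - 0) * d z"
      by (rule MVT2, simp, rule gd)
    then obtain z where z: "0 < z" "z < 1" "g 1 - g 0 = (1 - 0) * d z"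
      by blast
    have "g 0 = 0" unfolding g_def using W0 by simp
    moreover have "g 1 = W2 pe ne B Xd Xdp Efd eta etab V Vb" unfolding g_def a_def b_def by simp
    ultimately show ?thesis using z dpos[of z] by simp
  qed
  show ?thesis
    by (rule exI[of _ "ball (etab, Vb) r"]) (use r(1) W0 pos in auto)
qed


theorem proposition2:
  fixes pe ne :: "'m::finite \<Rightarrow> 'n::finite"
    and B :: "'n \<Rightarrow> 'n \<Rightarrow> real"
    and Xd Xdp Tv Efd Vb :: "real^'n"
    and etab :: "real^'m"
  assumes no_loops: "\<forall>k. pe k \<noteq> ne k"
    and simple: "\<forall>k l. {pe k, ne k} = {pe l, ne l} \<longrightarrow> k = l"
    and connected: "\<forall>i j. (\<lambda>a b. \<exists>k. {pe k, ne k} = {a, b})\<^sup>*\<^sup>* i j"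
    and B_sym: "\<forall>i j. B i j = B j i"
    and B_edge: "\<forall>k. B (pe k) (ne k) > 0"
    and B_self: "\<forall>i. B i i < 0 \<and> \<bar>B i i\<bar> > (\<Sum>j\<in>{j. \<exists>k. {pe k, ne k} = {i, j}}. \<bar>B i j\<bar>)"
    and X_pos: "\<forall>i. Xd$i > Xdp$i \<and> Xdp$i > 0"
    and T_pos: "\<forall>i. Tv$i > 0"
    and etab_range: "\<forall>k. - (pi/2) < etab$k \<and> etab$k < pi/2"
    and Vb_pos: "\<forall>i. Vb$i > 0"
    and equil: "Emat pe ne B Xd Xdp etab *v Vb = Efd"
    and star: "cond_star pe ne B Xd Xdp etab Vb"
  shows "(\<exists>U. open U \<and> (etab, Vb) \<in> U \<and> W2 pe ne B Xd Xdp Efd etab etab Vb Vb = 0 \<and>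
            (\<forall>eta V. (eta, V) \<in> U \<and> (eta, V) \<noteq> (etab, Vb) \<longrightarrow>
               W2 pe ne B Xd Xdp Efd eta etab V Vb > 0))
      \<and> (\<forall>(eta :: real \<Rightarrow> real^'m) (V :: real \<Rightarrow> real^'n) (v :: real \<Rightarrow> real^'m) V' t.
            (eta has_vector_derivative v t) (at t)
            \<and> (V has_vector_derivative V' t) (at t)
            \<and> diagm Tv *v V' t = - (Emat pe ne B Xd Xdp (eta t) *v V t) + Efd
          \<longrightarrow> (let g = Emat pe ne B Xd Xdp (eta t) *v V t - Efd;
                   lam = Gam pe ne B (V t) *v vsin (eta t);
                   lamb = Gam pe ne B Vb *v vsin etab;
                   vb = (0 :: real^'m)
               in ((\<lambda>s. W2 pe ne B Xd Xdp Efd (eta s) etab (V s) Vb) has_real_derivative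
                     (- (g \<bullet> (matrix_inv (diagm Tv) *v g)) + (lam - lamb) \<bullet> (v t - vb))) (at t)))"
    using part1[OF no_loops B_sym B_edge etab_range Vb_pos equil star]
        part2[OF no_loops B_sym T_pos, of Xd Xdp Efd Vb etab]
  by blast

end
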